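(* Let $A$ be an $n\times n$ matrix with a designated set of large positions, and let $(X,Y)$ be a restriction with $|X|\ge1$ that is $q$-good for some $q<1/50$. Then $(X,Y)$ has a $13q$-strong line.
   Context: Let $A=(a_{ij})_{i,j\in[n]}$ with a designated set $L\subseteq[n]\times[n]$ of large positions. A restriction is $(X,Y)$ with $X,Y\subseteq[n]$, $|X|=|Y|$; a generalized diagonal of $A[X,Y]$ is $\{(i,\sigma(i)):i\in X\}$ for a bijection $\sigma:X\to Y$, random meaning uniform $\sigma$; it is good if it contains exactly one large position; $(X,Y)$ is $q$-good if a random generalized diagonal is good with probability $\ge1-q$. For $i\in X$, row $i$ is $p$-strong for $(X,Y)$ if at least $(1-p)|Y|$ of the positions $\{(i,j):j\in Y\}$ are large; column $j\in Y$ is $p$-strong if at least $(1-p)|X|$ of $\{(i,j):i\in X\}$ are large. A $p$-strong line is a $p$-strong row or column. *)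

theory Defs
  imports Complex_Main "HOL-Library.FuncSet"
begin

text \<open>Positions are pairs (i,j) with i,j in [n] = {1..n}; L is the set of large positions.\<close>

definition is_restriction :: "nat \<Rightarrow> nat set \<Rightarrow> nat set \<Rightarrow> bool" where
  "is_restriction n X Y \<longleftrightarrow> X \<subseteq> {1..n} \<and> Y \<subseteq> {1..n} \<and> card X = card Y"

definition bijections :: "nat set \<Rightarrow> nat set \<Rightarrow> (nat \<Rightarrow> nat) set" where
  "bijections X Y = {\<sigma> \<in> X \<rightarrow>\<^sub>E Y. bij_betw \<sigma> X Y}"

definition gen_diagonal :: "(nat \<Rightarrow> nat) \<Rightarrow> nat set \<Rightarrow> (nat \<times> nat) set" where
  "gen_diagonal \<sigma> X = (\<lambda>i. (i, \<sigma> i)) ` X"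

definition good_diagonal :: "(nat \<times> nat) set \<Rightarrow> (nat \<times> nat) set \<Rightarrow> bool" where
  "good_diagonal L D \<longleftrightarrow> card (D \<inter> L) = 1"

definition q_good :: "(nat \<times> nat) set \<Rightarrow> nat set \<Rightarrow> nat set \<Rightarrow> real \<Rightarrow> bool" where
  "q_good L X Y q \<longleftrightarrow>
     real (card {\<sigma> \<in> bijections X Y. good_diagonal L (gen_diagonal \<sigma> X)})
       / real (card (bijections X Y)) \<ge> 1 - q"

definition strong_row :: "(nat \<times> nat) set \<Rightarrow> nat set \<Rightarrow> nat set \<Rightarrow> real \<Rightarrow> nat \<Rightarrow> bool" where
  "strong_row L X Y p i \<longleftrightarrow> i \<in> X \<and>
     real (card {j \<in> Y. (i, j) \<in> L}) \<ge> (1 - p) * real (card Y)"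

definition strong_col :: "(nat \<times> nat) set \<Rightarrow> nat set \<Rightarrow> nat set \<Rightarrow> real \<Rightarrow> nat \<Rightarrow> bool" where
  "strong_col L X Y p j \<longleftrightarrow> j \<in> Y \<and>
     real (card {i \<in> X. (i, j) \<in> L}) \<ge> (1 - p) * real (card X)"

definition has_strong_line :: "(nat \<times> nat) set \<Rightarrow> nat set \<Rightarrow> nat set \<Rightarrow> real \<Rightarrow> bool" where
  "has_strong_line L X Y p \<longleftrightarrow> (\<exists>i. strong_row L X Y p i) \<or> (\<exists>j. strong_col L X Y p j)"

end

theory Submission
  imports Defs "HOL-Combinatorics.Permutations"
begin


lemma bijectionsD:
  assumes "\<sigma> \<in> bijections X Y"
  shows "\<sigma> \<in> X \<rightarrow>\<^sub>E Y" "bij_betw \<sigma> X Y" "inj_on \<sigma> X" "\<sigma> ` X = Y"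
    "\<And>x. x \<in> X \<Longrightarrow> \<sigma> x \<in> Y" "\<And>x. x \<notin> X \<Longrightarrow> \<sigma> x = undefined"
  using assms by (auto simp: bijections_def bij_betw_def PiE_def extensional_def)

lemma bijectionsI:
  assumes "\<And>x. x \<notin> X \<Longrightarrow> \<sigma> x = undefined" "bij_betw \<sigma> X Y"
  shows "\<sigma> \<in> bijections X Y"
  using assms by (auto simp: bijections_def bij_betw_def PiE_def extensional_def)

lemma restrict_bij:
  assumes "i \<in> X" "j \<in> Y"
  shows "bij_betw (\<lambda>\<sigma>. restrict \<sigma> (X-{i})) {\<sigma>\<in>bijections X Y. \<sigma> i = j}
           (bijections (X-{i}) (Y-{j}))"
proof (rule bij_betw_byWitness[where f' = "\<lambda>\<tau>. \<tau>(i := j)"])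
  show "\<forall>a\<in>{\<sigma> \<in> bijections X Y. \<sigma> i = j}. (restrict a (X - {i}))(i := j) = a"
  proof
    fix a assume a: "a \<in> {\<sigma> \<in> bijections X Y. \<sigma> i = j}"
    show "(restrict a (X - {i}))(i := j) = a"
    proof
      fix x show "((restrict a (X - {i}))(i := j)) x = a x"
        using a bijectionsD(6)[of a X Y x] by auto
    qed
  qed
  show "\<forall>a'\<in>bijections (X - {i}) (Y - {j}). restrict (a'(i := j)) (X - {i}) = a'"
  proof
    fix a' assume a': "a' \<in> bijections (X - {i}) (Y - {j})"
    show "restrict (a'(i := j)) (X - {i}) = a'"
    proof
      fix x show "restrict (a'(i := j)) (X - {i}) x = a' x"
        using a' bijectionsD(6)[of a' "X-{i}" "Y-{j}" x] by auto
    qed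
  qed
  show "(\<lambda>\<sigma>. restrict \<sigma> (X - {i})) ` {\<sigma> \<in> bijections X Y. \<sigma> i = j} \<subseteq> bijections (X - {i}) (Y - {j})"
  proof
    fix \<tau> assume "\<tau> \<in> (\<lambda>\<sigma>. restrict \<sigma> (X - {i})) ` {\<sigma> \<in> bijections X Y. \<sigma> i = j}"
    then obtain \<sigma> where s: "\<sigma> \<in> bijections X Y" "\<sigma> i = j" and t: "\<tau> = restrict \<sigma> (X - {i})" by auto
    have bb: "bij_betw \<sigma> X Y" using bijectionsD[OF s(1)] by auto
    have "bij_betw \<sigma> (X - {i}) (Y - {j})"
      using bij_betw_DiffI[OF bb, of "{i}" "{j}"] s assms
      by (simp add: bij_betw_singletonI)
    hence "bij_betw \<tau> (X - {i}) (Y - {j})" unfolding t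
      using bij_betw_cong[of "X-{i}" \<sigma> "restrict \<sigma> (X-{i})"] by auto
    then show "\<tau> \<in> bijections (X - {i}) (Y - {j})"
      by (intro bijectionsI) (auto simp: t)
  qed
  show "(\<lambda>\<tau>. \<tau>(i := j)) ` bijections (X - {i}) (Y - {j}) \<subseteq> {\<sigma> \<in> bijections X Y. \<sigma> i = j}"
  proof
    fix \<sigma> assume "\<sigma> \<in> (\<lambda>\<tau>. \<tau>(i := j)) ` bijections (X - {i}) (Y - {j})"
    then obtain \<tau> where t: "\<tau> \<in> bijections (X - {i}) (Y - {j})" and s: "\<sigma> = \<tau>(i := j)" by auto
    have bb: "bij_betw \<tau> (X-{i}) (Y-{j})" using bijectionsD[OF t] by auto
    have "bij_betw \<sigma> (X-{i}) (Y-{j})"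
      using bij_betw_cong[of "X-{i}" \<tau> \<sigma>] bb s by auto
    moreover have "bij_betw \<sigma> {i} {j}" using s by (simp add: bij_betw_singletonI)
    ultimately have "bij_betw \<sigma> ((X-{i}) \<union> {i}) ((Y-{j}) \<union> {j})"
      by (intro bij_betw_combine) auto
    hence "bij_betw \<sigma> X Y" using assms by (simp add: insert_absorb)
    moreover have "\<And>x. x \<notin> X \<Longrightarrow> \<sigma> x = undefined" using bijectionsD(6)[OF t] s assms by auto
    ultimately show "\<sigma> \<in> {\<sigma> \<in> bijections X Y. \<sigma> i = j}" using s by (auto intro: bijectionsI)
  qed
qed

lemma card_fix_restr:
  assumes "i \<in> X" "j \<in> Y"
  shows "card {\<sigma>\<in>bijections X Y. \<sigma> i = j} = card (bijections (X-{i}) (Y-{j}))"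
  using bij_betw_same_card[OF restrict_bij[OF assms]] .

lemma bijections_empty: "bijections {} {} = {\<lambda>_. undefined}"
  by (auto simp: bijections_def bij_betw_def)

lemma finite_bijections: "finite X \<Longrightarrow> finite Y \<Longrightarrow> finite (bijections X Y)"
  by (rule finite_subset[of _ "X \<rightarrow>\<^sub>E Y"]) (auto simp: bijections_def intro: finite_PiE)

lemma card_bijections:
  "finite X \<Longrightarrow> finite Y \<Longrightarrow> card X = card Y \<Longrightarrow> card (bijections X Y) = fact (card X)"
proof (induction "card X" arbitrary: X Y)
  case 0
  then show ?case by (simp add: bijections_empty)
next
  case (Suc n)
  then obtain i where i: "i \<in> X" by (metis card.empty ex_in_conv nat.distinct(1))
  have cY: "card Y = Suc n" using Suc by simp
  have B: "bijections X Y = (\<Union>j\<in>Y. {\<sigma>\<in>bijections X Y. \<sigma> i = j})"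
    using bijectionsD(5)[OF _ i] by auto
  have "card (bijections X Y) = card (\<Union>j\<in>Y. {\<sigma>\<in>bijections X Y. \<sigma> i = j})"
    using B by (rule arg_cong)
  also have "\<dots> = (\<Sum>j\<in>Y. card {\<sigma>\<in>bijections X Y. \<sigma> i = j})"
    by (rule card_UN_disjoint) (use Suc finite_bijections in auto)
  also have "\<dots> = (\<Sum>j\<in>Y. fact n)"
  proof (rule sum.cong[OF refl])
    fix j assume j: "j \<in> Y"
    have "card {\<sigma>\<in>bijections X Y. \<sigma> i = j} = card (bijections (X-{i}) (Y-{j}))"
      by (rule card_fix_restr[OF i j])
    also have "\<dots> = fact (card (X-{i}))"
      using Suc.hyps(1)[of "X-{i}" "Y-{j}"] Suc.prems Suc.hyps(2) i j by auto
    also have "\<dots> = fact n" using Suc.hyps(2) i Suc.prems by (metis card_Diff_singleton diff_Suc_1)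
    finally show "card {\<sigma>\<in>bijections X Y. \<sigma> i = j} = fact n" .
  qed
  also have "\<dots> = fact (Suc n)" using cY by simp
  finally show ?case using Suc.hyps(2) by simp
qed

lemma card_fix1:
  assumes "finite X" "finite Y" "card X = card Y" "i \<in> X" "j \<in> Y"
  shows "card {\<sigma>\<in>bijections X Y. \<sigma> i = j} = fact (card X - 1)"
  using card_fix_restr[OF assms(4,5)] card_bijections[of "X-{i}" "Y-{j}"] assms by auto

lemma card_fix2:
  assumes "finite X" "finite Y" "card X = card Y" "i \<in> X" "j \<in> Y" "i' \<in> X" "j' \<in> Y"
    "i \<noteq> i'" "j \<noteq> j'"
  shows "card {\<sigma>\<in>bijections X Y. \<sigma> i = j \<and> \<sigma> i' = j'} = fact (card X - 2)"
proof -
  have bb: "bij_betw (\<lambda>\<sigma>. restrict \<sigma> (X-{i})) {\<sigma>\<in>bijections X Y. \<sigma> i = j \<and> \<sigma> i' = j'}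
     {\<tau>\<in>bijections (X-{i}) (Y-{j}). \<tau> i' = j'}"
  proof (rule bij_betw_subset[OF restrict_bij[OF assms(4,5)]])
    show "{\<sigma> \<in> bijections X Y. \<sigma> i = j \<and> \<sigma> i' = j'} \<subseteq> {\<sigma> \<in> bijections X Y. \<sigma> i = j}" by auto
    show "(\<lambda>\<sigma>. restrict \<sigma> (X - {i})) ` {\<sigma> \<in> bijections X Y. \<sigma> i = j \<and> \<sigma> i' = j'} =
      {\<tau> \<in> bijections (X - {i}) (Y - {j}). \<tau> i' = j'}"
    proof
      show "(\<lambda>\<sigma>. restrict \<sigma> (X - {i})) ` {\<sigma> \<in> bijections X Y. \<sigma> i = j \<and> \<sigma> i' = j'}
         \<subseteq> {\<tau> \<in> bijections (X - {i}) (Y - {j}). \<tau> i' = j'}"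
        using bij_betw_imp_surj_on[OF restrict_bij[OF assms(4,5)]] assms by auto
      show "{\<tau> \<in> bijections (X - {i}) (Y - {j}). \<tau> i' = j'} \<subseteq>
         (\<lambda>\<sigma>. restrict \<sigma> (X - {i})) ` {\<sigma> \<in> bijections X Y. \<sigma> i = j \<and> \<sigma> i' = j'}"
      proof
        fix \<tau> assume t: "\<tau> \<in> {\<tau> \<in> bijections (X - {i}) (Y - {j}). \<tau> i' = j'}"
        then obtain \<sigma> where s: "\<sigma> \<in> {\<sigma>\<in>bijections X Y. \<sigma> i = j}" "\<tau> = restrict \<sigma> (X-{i})"
          using bij_betw_imp_surj_on[OF restrict_bij[OF assms(4,5)]] by (metis (no_types, lifting) image_iff mem_Collect_eq)
        then show "\<tau> \<in> (\<lambda>\<sigma>. restrict \<sigma> (X - {i})) ` {\<sigma> \<in> bijections X Y. \<sigma> i = j \<and> \<sigma> i' = j'}"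
          using t assms by auto
      qed
    qed
  qed
  have "card {\<sigma>\<in>bijections X Y. \<sigma> i = j \<and> \<sigma> i' = j'} = card {\<tau>\<in>bijections (X-{i}) (Y-{j}). \<tau> i' = j'}"
    using bij_betw_same_card[OF bb] .
  also have "\<dots> = fact (card (X-{i}) - 1)"
    by (rule card_fix1) (use assms in auto)
  also have "\<dots> = fact (card X - 2)" using assms by (simp add: numeral_2_eq_2)
  finally show ?thesis .
qed

lemma card_fix2_le:
  assumes "finite X" "finite Y" "card X = card Y" "i \<in> X" "j \<in> Y" "i' \<in> X" "j' \<in> Y"
    "i \<noteq> i'"
  shows "card {\<sigma>\<in>bijections X Y. \<sigma> i = j \<and> \<sigma> i' = j'} \<le> fact (card X - 2)"
proof (cases "j = j'")
  case True
  have e: "{\<sigma>\<in>bijections X Y. \<sigma> i = j \<and> \<sigma> i' = j'} = {}"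
  proof (rule ccontr)
    assume "{\<sigma>\<in>bijections X Y. \<sigma> i = j \<and> \<sigma> i' = j'} \<noteq> {}"
    then obtain \<sigma> where s: "\<sigma> \<in> bijections X Y" "\<sigma> i = j" "\<sigma> i' = j'" by auto
    have "inj_on \<sigma> X" using bijectionsD(3)[OF s(1)] .
    then show False using s True assms(4,6,8) by (metis inj_onD)
  qed
  show ?thesis unfolding e by simp
next
  case False
  show ?thesis using card_fix2[OF assms False] by (rule eq_imp_le)
qed



lemma card_filter_sum: "finite A \<Longrightarrow> card {x\<in>A. P x} = (\<Sum>x\<in>A. if P x then 1 else (0::nat))"
  by (simp add: sum.If_cases Int_def)

lemma mult_ind: "(if a then 1 else 0) * (if b then 1 else 0) = (if a \<and> b then 1 else (0::nat))"
  by simp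

lemma card_filter_sum_real: "finite A \<Longrightarrow> real (card {x\<in>A. P x}) = (\<Sum>x\<in>A. if P x then 1 else (0::real))"
  by (simp add: sum.If_cases Int_def)

lemma pointwise_ineq:
  fixes z :: nat and l :: real assumes "l > 0"
  shows "real z \<le> (if z = 1 then 1 else 0) + (l * (if z \<ge> 2 then 1 else 0) + real z ^ 2 / l) / 2"
proof (cases "z \<ge> 2")
  case True
  have "0 \<le> (l - real z)^2" by simp
  hence "2 * l * real z \<le> l^2 + real z ^ 2" by (simp add: power2_diff)
  hence "real z \<le> (l + real z ^ 2 / l) / 2" using assms by (simp add: field_simps power2_eq_square)
  then show ?thesis using True by simp
next
  case False
  then have "z = 0 \<or> z = 1" by auto
  then show ?thesis using assms by auto
qed

locale D =
  fixes X Y :: "nat set" and L :: "(nat \<times> nat) set"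
  assumes finX: "finite X" and finY: "finite Y" and cXY: "card X = card Y"
begin

definition Z :: "(nat \<Rightarrow> nat) \<Rightarrow> nat" where "Z \<sigma> = card {i\<in>X. (i, \<sigma> i) \<in> L}"
definition R :: "nat \<Rightarrow> nat" where "R i = card {j\<in>Y. (i, j) \<in> L}"
definition L' where "L' = L \<inter> (X \<times> Y)"

lemma finB: "finite (bijections X Y)" using finite_bijections finX finY by blast
lemma cardB: "card (bijections X Y) = fact (card X)" using card_bijections finX finY cXY by blast
lemma fix1: "i \<in> X \<Longrightarrow> j \<in> Y \<Longrightarrow> card {\<sigma>\<in>bijections X Y. \<sigma> i = j} = fact (card X - 1)"
  using card_fix1 finX finY cXY by blast
lemma fix2: "i \<in> X \<Longrightarrow> j \<in> Y \<Longrightarrow> i' \<in> X \<Longrightarrow> j' \<in> Y \<Longrightarrow> i \<noteq> i' \<Longrightarrow> j \<noteq> j' \<Longrightarrow>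
   card {\<sigma>\<in>bijections X Y. \<sigma> i = j \<and> \<sigma> i' = j'} = fact (card X - 2)"
  using card_fix2 finX finY cXY by blast
lemma fix2_le: "i \<in> X \<Longrightarrow> j \<in> Y \<Longrightarrow> i' \<in> X \<Longrightarrow> j' \<in> Y \<Longrightarrow> i \<noteq> i' \<Longrightarrow>
   card {\<sigma>\<in>bijections X Y. \<sigma> i = j \<and> \<sigma> i' = j'} \<le> fact (card X - 2)"
  using card_fix2_le finX finY cXY by blast

definition ind :: "(nat \<Rightarrow> nat) \<Rightarrow> nat \<Rightarrow> nat" where
  "ind \<sigma> i = (if (i, \<sigma> i) \<in> L then 1 else 0)"

lemma Z_sum: "Z \<sigma> = (\<Sum>i\<in>X. ind \<sigma> i)"
  unfolding Z_def ind_def using finX by (rule card_filter_sum)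

lemma card_L': "card L' = (\<Sum>i\<in>X. R i)"
proof -
  have "L' = Sigma X (\<lambda>i. {j\<in>Y. (i, j) \<in> L})" unfolding L'_def by auto
  then show ?thesis unfolding R_def using finX finY by (simp add: card_SigmaI)
qed

lemma card_row: assumes "i \<in> X"
  shows "card {\<sigma>\<in>bijections X Y. (i, \<sigma> i) \<in> L} = R i * fact (card X - 1)"
proof -
  have e: "{\<sigma>\<in>bijections X Y. (i, \<sigma> i) \<in> L} = (\<Union>j\<in>{j\<in>Y. (i, j) \<in> L}. {\<sigma>\<in>bijections X Y. \<sigma> i = j})"
    using bijectionsD(5)[OF _ assms, of _ Y] by auto
  have "card {\<sigma>\<in>bijections X Y. (i, \<sigma> i) \<in> L} = (\<Sum>j\<in>{j\<in>Y. (i, j) \<in> L}. card {\<sigma>\<in>bijections X Y. \<sigma> i = j})"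
    unfolding e by (rule card_UN_disjoint) (use finY finB in auto)
  also have "\<dots> = (\<Sum>j\<in>{j\<in>Y. (i, j) \<in> L}. fact (card X - 1))"
    by (rule sum.cong) (use fix1 assms in auto)
  finally show ?thesis unfolding R_def by simp
qed

lemma sumZ: "(\<Sum>\<sigma>\<in>bijections X Y. Z \<sigma>) = card L' * fact (card X - 1)"
proof -
  have "(\<Sum>\<sigma>\<in>bijections X Y. Z \<sigma>) = (\<Sum>\<sigma>\<in>bijections X Y. \<Sum>i\<in>X. ind \<sigma> i)"
    by (simp add: Z_sum)
  also have "\<dots> = (\<Sum>i\<in>X. \<Sum>\<sigma>\<in>bijections X Y. ind \<sigma> i)" by (rule sum.swap)
  also have "\<dots> = (\<Sum>i\<in>X. card {\<sigma>\<in>bijections X Y. (i, \<sigma> i) \<in> L})"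
    unfolding ind_def using finB by (simp add: card_filter_sum)
  also have "\<dots> = (\<Sum>i\<in>X. R i * fact (card X - 1))"
    by (rule sum.cong) (use card_row in auto)
  also have "\<dots> = card L' * fact (card X - 1)" by (simp add: card_L' sum_distrib_right)
  finally show ?thesis .
qed

lemma card_pair_le:
  assumes "i \<in> X" "i' \<in> X" "i \<noteq> i'"
  shows "card {\<sigma>\<in>bijections X Y. (i, \<sigma> i) \<in> L \<and> (i', \<sigma> i') \<in> L} \<le> R i * R i' * fact (card X - 2)"
proof -
  let ?J = "{j\<in>Y. (i, j) \<in> L} \<times> {j\<in>Y. (i', j) \<in> L}"
  have "{\<sigma>\<in>bijections X Y. (i, \<sigma> i) \<in> L \<and> (i', \<sigma> i') \<in> L} \<subseteq>
     (\<Union>p\<in>?J. {\<sigma>\<in>bijections X Y. \<sigma> i = fst p \<and> \<sigma> i' = snd p})"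
    using bijectionsD(5)[OF _ assms(1), of _ Y] bijectionsD(5)[OF _ assms(2), of _ Y] by force
  hence "card {\<sigma>\<in>bijections X Y. (i, \<sigma> i) \<in> L \<and> (i', \<sigma> i') \<in> L} \<le>
     card (\<Union>p\<in>?J. {\<sigma>\<in>bijections X Y. \<sigma> i = fst p \<and> \<sigma> i' = snd p})"
    by (rule card_mono[rotated]) (use finY finB in auto)
  also have "\<dots> \<le> (\<Sum>p\<in>?J. card {\<sigma>\<in>bijections X Y. \<sigma> i = fst p \<and> \<sigma> i' = snd p})"
    by (rule card_UN_le) (use finY in auto)
  also have "\<dots> \<le> (\<Sum>p\<in>?J. fact (card X - 2))"
    by (rule sum_mono) (use fix2_le assms in auto)
  also have "\<dots> = R i * R i' * fact (card X - 2)"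
    unfolding R_def using finY by (simp add: card_cartesian_product)
  finally show ?thesis .
qed

lemma sumZ2: "(\<Sum>\<sigma>\<in>bijections X Y. Z \<sigma> ^ 2) \<le> card L' * fact (card X - 1) + card L' ^ 2 * fact (card X - 2)"
proof -
  have "(\<Sum>\<sigma>\<in>bijections X Y. Z \<sigma> ^ 2) = (\<Sum>\<sigma>\<in>bijections X Y. \<Sum>i\<in>X. \<Sum>i'\<in>X. ind \<sigma> i * ind \<sigma> i')"
    by (simp add: Z_sum power2_eq_square sum_product)
  also have "\<dots> = (\<Sum>i\<in>X. \<Sum>\<sigma>\<in>bijections X Y. \<Sum>i'\<in>X. ind \<sigma> i * ind \<sigma> i')" by (rule sum.swap)
  also have "\<dots> = (\<Sum>i\<in>X. \<Sum>i'\<in>X. \<Sum>\<sigma>\<in>bijections X Y. ind \<sigma> i * ind \<sigma> i')"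
    by (rule sum.cong[OF refl], rule sum.swap)
  also have "\<dots> = (\<Sum>i\<in>X. \<Sum>i'\<in>X. card {\<sigma>\<in>bijections X Y. (i, \<sigma> i) \<in> L \<and> (i', \<sigma> i') \<in> L})"
    unfolding ind_def mult_ind using finB by (simp add: card_filter_sum)
  also have "\<dots> \<le> (\<Sum>i\<in>X. \<Sum>i'\<in>X. (if i = i' then R i * fact (card X - 1) else 0) + R i * R i' * fact (card X - 2))"
  proof (intro sum_mono)
    fix i i' assume ii: "i \<in> X" "i' \<in> X"
    show "card {\<sigma>\<in>bijections X Y. (i, \<sigma> i) \<in> L \<and> (i', \<sigma> i') \<in> L}
       \<le> (if i = i' then R i * fact (card X - 1) else 0) + R i * R i' * fact (card X - 2)"
    proof (cases "i = i'")
      case True then show ?thesis using card_row[OF ii(1)] by simp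
    next
      case False then show ?thesis using card_pair_le[OF ii False] by simp
    qed
  qed
  also have "\<dots> = (\<Sum>i\<in>X. R i * fact (card X - 1)) + (\<Sum>i\<in>X. \<Sum>i'\<in>X. R i * R i' * fact (card X - 2))"
    using finX by (simp add: sum.distrib)
  also have "\<dots> = card L' * fact (card X - 1) + card L' ^ 2 * fact (card X - 2)"
    by (simp add: card_L' sum_distrib_right sum_distrib_left power2_eq_square sum_product mult.assoc mult.commute mult.left_commute)
  finally show ?thesis .
qed

lemma bad_bound:
  assumes good: "(1-q) * fact (card X) \<le> real (card {\<sigma>\<in>bijections X Y. Z \<sigma> = 1})"
  shows "real (card {\<sigma>\<in>bijections X Y. Z \<sigma> \<noteq> 1}) \<le> q * fact (card X)"
proof -
  have u: "{\<sigma>\<in>bijections X Y. Z \<sigma> = 1} \<union> {\<sigma>\<in>bijections X Y. Z \<sigma> \<noteq> 1} = bijections X Y" by auto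
  have "card {\<sigma>\<in>bijections X Y. Z \<sigma> = 1} + card {\<sigma>\<in>bijections X Y. Z \<sigma> \<noteq> 1}
     = card ({\<sigma>\<in>bijections X Y. Z \<sigma> = 1} \<union> {\<sigma>\<in>bijections X Y. Z \<sigma> \<noteq> 1})"
    by (rule card_Un_disjoint[symmetric]) (use finB in auto)
  hence "card (bijections X Y) = card {\<sigma>\<in>bijections X Y. Z \<sigma> = 1} + card {\<sigma>\<in>bijections X Y. Z \<sigma> \<noteq> 1}"
    unfolding u by simp
  hence "real (fact (card X)) = real (card {\<sigma>\<in>bijections X Y. Z \<sigma> = 1}) + real (card {\<sigma>\<in>bijections X Y. Z \<sigma> \<noteq> 1})"
    using cardB by simp
  then show ?thesis using good by (simp add: algebra_simps)
qed

lemma q_nonneg: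
  assumes good: "(1-q) * fact (card X) \<le> real (card {\<sigma>\<in>bijections X Y. Z \<sigma> = 1})"
  shows "q \<ge> 0"
proof -
  have "card {\<sigma>\<in>bijections X Y. Z \<sigma> = 1} \<le> card (bijections X Y)" by (rule card_mono[OF finB]) auto
  hence "real (card {\<sigma>\<in>bijections X Y. Z \<sigma> = 1}) \<le> fact (card X)" using cardB
    by (metis of_nat_fact of_nat_le_iff)
  with good have "(1-q) * fact (card X) \<le> fact (card X)" by linarith
  moreover have "(fact (card X) :: real) > 0" by simp
  ultimately have "0 \<le> q * fact (card X)" by (simp add: algebra_simps)
  then show ?thesis using \<open>(fact (card X) :: real) > 0\<close> by (simp add: zero_le_mult_iff)
qed

lemma Nbound:
  assumes m2: "card X \<ge> 2"
    and good: "(1-q) * fact (card X) \<le> real (card {\<sigma>\<in>bijections X Y. Z \<sigma> = 1})"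
    and q: "q < 1/50"
  shows "real (card L') \<le> 131/100 * card X"
proof (cases "card L' = 0")
  case True then show ?thesis by simp
next
  case False
  define N where "N = real (card L')"
  define m where "m = real (card X)"
  define n1 where "n1 = real (card X - 1)"
  define F2 where "F2 = real (fact (card X - 2))"
  have Npos: "N > 0" using False N_def by simp
  have mn1: "m = n1 + 1" using m2 unfolding m_def n1_def by simp
  have n1pos: "n1 \<ge> 1" using m2 unfolding n1_def by simp
  have F2pos: "F2 > 0" unfolding F2_def by simp
  have F1n: "fact (card X - 1) = (card X - 1) * fact (card X - 2)"
    using m2 fact_reduce[where 'a=nat, of "card X - 1"] by (simp add: numeral_2_eq_2 of_nat_id)
  have F1: "real (fact (card X - 1)) = n1 * F2"
    unfolding n1_def F2_def by (simp only: F1n of_nat_mult)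
  have Mn: "fact (card X) = card X * fact (card X - 1)"
    using m2 fact_reduce[where 'a=nat, of "card X"] by simp
  have M: "real (fact (card X)) = m * n1 * F2"
    unfolding m_def by (simp only: Mn of_nat_mult F1 mult.assoc)
  define l where "l = 12 * N / m"
  have mpos: "m > 0" using mn1 n1pos by simp
  have lpos: "l > 0" unfolding l_def using Npos mpos by simp
  let ?B = "bijections X Y"
  have bad: "real (card {\<sigma>\<in>?B. Z \<sigma> \<noteq> 1}) \<le> q * (m * n1 * F2)"
    using bad_bound[OF good] M by simp
  have G2: "real (card {\<sigma>\<in>?B. Z \<sigma> \<ge> 2}) \<le> q * (m * n1 * F2)"
  proof -
    have "card {\<sigma>\<in>?B. Z \<sigma> \<ge> 2} \<le> card {\<sigma>\<in>?B. Z \<sigma> \<noteq> 1}"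
      by (rule card_mono) (use finB in auto)
    then show ?thesis using bad by linarith
  qed
  have G1: "real (card {\<sigma>\<in>?B. Z \<sigma> = 1}) \<le> m * n1 * F2"
  proof -
    have "card {\<sigma>\<in>?B. Z \<sigma> = 1} \<le> card ?B" by (rule card_mono[OF finB]) auto
    then have "real (card {\<sigma>\<in>?B. Z \<sigma> = 1}) \<le> real (fact (card X))" unfolding cardB by (simp only: of_nat_le_iff)
    then show ?thesis using M by (simp only:)
  qed
  have S1: "(\<Sum>\<sigma>\<in>?B. real (Z \<sigma>)) = N * (n1 * F2)"
    using arg_cong[OF sumZ, of real] F1 unfolding N_def by simp
  have S2: "(\<Sum>\<sigma>\<in>?B. real (Z \<sigma>) ^ 2) \<le> N * (n1 * F2) + N^2 * F2"
  proof -
    have "real (\<Sum>\<sigma>\<in>?B. Z \<sigma> ^ 2) \<le> real (card L' * fact (card X - 1) + card L' ^ 2 * fact (card X - 2))"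
      using sumZ2 by (simp only: of_nat_le_iff)
    then show ?thesis using F1 unfolding N_def F2_def by simp
  qed
  have "(\<Sum>\<sigma>\<in>?B. real (Z \<sigma>)) \<le> (\<Sum>\<sigma>\<in>?B. (if Z \<sigma> = 1 then 1 else 0) + (l * (if Z \<sigma> \<ge> 2 then 1 else 0) + real (Z \<sigma>) ^ 2 / l) / 2)"
    by (rule sum_mono) (rule pointwise_ineq[OF lpos])
  also have "\<dots> = real (card {\<sigma>\<in>?B. Z \<sigma> = 1}) + (l * real (card {\<sigma>\<in>?B. Z \<sigma> \<ge> 2}) + (\<Sum>\<sigma>\<in>?B. real (Z \<sigma>) ^ 2) / l) / 2"
    by (simp add: sum.distrib card_filter_sum_real[OF finB] sum_distrib_left sum_divide_distrib add_divide_distrib)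
  finally have main: "N * (n1 * F2) \<le> m * n1 * F2 + (l * (q * (m * n1 * F2)) + (N * (n1 * F2) + N^2 * F2) / l) / 2"
  proof -
    assume h: "(\<Sum>\<sigma>\<in>?B. real (Z \<sigma>)) \<le> real (card {\<sigma>\<in>?B. Z \<sigma> = 1}) + (l * real (card {\<sigma>\<in>?B. Z \<sigma> \<ge> 2}) + (\<Sum>\<sigma>\<in>?B. real (Z \<sigma>) ^ 2) / l) / 2"
    have a: "l * real (card {\<sigma>\<in>?B. Z \<sigma> \<ge> 2}) \<le> l * (q * (m * n1 * F2))"
      using G2 lpos by (simp add: mult_left_mono)
    have b: "(\<Sum>\<sigma>\<in>?B. real (Z \<sigma>) ^ 2) / l \<le> (N * (n1 * F2) + N^2 * F2) / l"
      using S2 lpos by (simp add: divide_right_mono)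
    have c: "real (card {\<sigma>\<in>?B. Z \<sigma> = 1}) + (l * real (card {\<sigma>\<in>?B. Z \<sigma> \<ge> 2}) + (\<Sum>\<sigma>\<in>?B. real (Z \<sigma>) ^ 2) / l) / 2
      \<le> m * n1 * F2 + (l * (q * (m * n1 * F2)) + (N * (n1 * F2) + N^2 * F2) / l) / 2"
      using add_mono[OF G1 divide_right_mono[OF add_mono[OF a b], of 2]] by simp
    show ?thesis using h c S1 by simp
  qed
  have e1: "l * (q * (m * n1 * F2)) = 12 * N * q * n1 * F2" unfolding l_def using mpos by (simp add: field_simps)
  have e2: "(N * (n1 * F2) + N^2 * F2) / l = m * (n1 + N) * F2 / 12" unfolding l_def using mpos Npos
    by (simp add: field_simps power2_eq_square)
  have main2: "N * n1 * F2 \<le> (m * n1 + 6 * N * q * n1 + m * (n1 + N) / 24) * F2"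
  proof -
    have main': "N * (n1 * F2) \<le> m * n1 * F2 + (12 * N * q * n1 * F2 + m * (n1 + N) * F2 / 12) / 2"
      using main unfolding e1 e2 .
    have "(m * n1 + 6 * N * q * n1 + m * (n1 + N) / 24) * F2 = m * n1 * F2 + (12 * N * q * n1 * F2 + m * (n1 + N) * F2 / 12) / 2"
      by (simp add: field_simps)
    then show ?thesis using main' by (simp add: mult.assoc)
  qed
  hence main3: "N * n1 \<le> m * n1 + 6 * N * q * n1 + m * (n1 + N) / 24"
    using F2pos by (simp add: mult_le_cancel_right)
  have main4: "N * n1 \<le> m * n1 + 6 * (N * q * n1) + (m * n1) / 24 + (m * N) / 24"
    using main3 by (simp add: distrib_left add_divide_distrib mult.assoc)
  have h1: "N * q * n1 \<le> (1/50) * (N * n1)"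
  proof -
    have "N * q * n1 = q * (N * n1)" by simp
    also have "\<dots> \<le> (1/50) * (N * n1)" using q Npos n1pos by (intro mult_right_mono) auto
    finally show ?thesis .
  qed
  have h2: "m * N \<le> 2 * (N * n1)"
  proof -
    have "m * N = (n1 + 1) * N" using mn1 by simp
    also have "\<dots> \<le> (2 * n1) * N" using n1pos Npos by (intro mult_right_mono) auto
    finally show ?thesis by (simp add: ac_simps)
  qed
  have "N * n1 * (239/300) \<le> (25/24) * m * n1" using main4 h1 h2 by linarith
  hence "N * (239/300) \<le> (25/24) * m" using n1pos by (simp add: mult.commute mult.left_commute)
  hence "N \<le> (25/24) * (300/239) * m" by (simp add: field_simps)
  moreover have "(25/24) * (300/239) * m \<le> 131/100 * m" using mpos by simp
  ultimately show ?thesis unfolding N_def m_def by linarith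
qed


lemma Z1_unique:
  assumes "Z \<sigma> = 1" "k \<in> X" "(k, \<sigma> k) \<in> L" "k' \<in> X" "(k', \<sigma> k') \<in> L"
  shows "k = k'"
proof -
  obtain x where x: "{i\<in>X. (i, \<sigma> i) \<in> L} = {x}" using assms(1) unfolding Z_def by (rule card_1_singletonE)
  have "k \<in> {i\<in>X. (i, \<sigma> i) \<in> L}" "k' \<in> {i\<in>X. (i, \<sigma> i) \<in> L}" using assms by auto
  then show ?thesis using x by auto
qed

definition AP :: "nat \<times> nat \<Rightarrow> (nat \<Rightarrow> nat) set" where
  "AP P = {\<sigma>\<in>bijections X Y. \<sigma> (fst P) = snd P \<and> Z \<sigma> = 1}"

lemma finL': "finite L'" unfolding L'_def using finX finY by (simp add: finite_Int)

lemma G_sum: "card {\<sigma>\<in>bijections X Y. Z \<sigma> = 1} = (\<Sum>P\<in>L'. card (AP P))"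
proof -
  have e: "{\<sigma>\<in>bijections X Y. Z \<sigma> = 1} = (\<Union>P\<in>L'. AP P)"
  proof
    show "{\<sigma>\<in>bijections X Y. Z \<sigma> = 1} \<subseteq> (\<Union>P\<in>L'. AP P)"
    proof
      fix \<sigma> assume s: "\<sigma> \<in> {\<sigma>\<in>bijections X Y. Z \<sigma> = 1}"
      have c1: "card {i\<in>X. (i, \<sigma> i) \<in> L} = 1" using s unfolding Z_def by simp
      then obtain x where x: "{i\<in>X. (i, \<sigma> i) \<in> L} = {x}" by (rule card_1_singletonE)
      hence "x \<in> X" "(x, \<sigma> x) \<in> L" by auto
      moreover have "\<sigma> x \<in> Y" using bijectionsD(5)[of \<sigma> X Y x] s \<open>x \<in> X\<close> by auto
      ultimately have "(x, \<sigma> x) \<in> L'" unfolding L'_def by auto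
      moreover have "\<sigma> \<in> AP (x, \<sigma> x)" using s unfolding AP_def by auto
      ultimately show "\<sigma> \<in> (\<Union>P\<in>L'. AP P)" by blast
    qed
    show "(\<Union>P\<in>L'. AP P) \<subseteq> {\<sigma>\<in>bijections X Y. Z \<sigma> = 1}" unfolding AP_def by auto
  qed
  have "card (\<Union>P\<in>L'. AP P) = (\<Sum>P\<in>L'. card (AP P))"
  proof (rule card_UN_disjoint[OF finL'])
    show "\<forall>P\<in>L'. finite (AP P)" unfolding AP_def using finB by auto
    show "\<forall>P\<in>L'. \<forall>P'\<in>L'. P \<noteq> P' \<longrightarrow> AP P \<inter> AP P' = {}"
    proof (intro ballI impI)
      fix P P' assume P: "P \<in> L'" "P' \<in> L'" "P \<noteq> P'"
      show "AP P \<inter> AP P' = {}"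
      proof (rule ccontr)
        assume "AP P \<inter> AP P' \<noteq> {}"
        then obtain \<sigma> where s: "\<sigma> \<in> AP P" "\<sigma> \<in> AP P'" by auto
        obtain a b where ab: "P = (a, b)" by (cases P)
        obtain a' b' where ab': "P' = (a', b')" by (cases P')
        have h: "\<sigma> a = b" "\<sigma> a' = b'" "Z \<sigma> = 1" using s ab ab' unfolding AP_def by auto
        have h2: "(a, b) \<in> L" "a \<in> X" "(a', b') \<in> L" "a' \<in> X" using P ab ab' unfolding L'_def by auto
        have "a = a'" using Z1_unique[of \<sigma> a a'] h h2 by simp
        hence "fst P = fst P'" using ab ab' by simp
        moreover have "snd P = snd P'" using s calculation unfolding AP_def by auto
        ultimately show False using P(3) by (simp add: prod_eq_iff)
      qed
    qed
  qed
  then show ?thesis using e by simp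
qed

lemma exists_P:
  assumes "card {\<sigma>\<in>bijections X Y. Z \<sigma> = 1} > 0"
  shows "\<exists>P\<in>L'. card {\<sigma>\<in>bijections X Y. Z \<sigma> = 1} \<le> card (AP P) * card L'"
proof (rule ccontr)
  let ?G = "card {\<sigma>\<in>bijections X Y. Z \<sigma> = 1}"
  assume "\<not> ?thesis"
  hence lt: "\<And>P. P \<in> L' \<Longrightarrow> card (AP P) * card L' < ?G" by auto
  have ne: "L' \<noteq> {}" using assms G_sum by auto
  have "?G * card L' = (\<Sum>P\<in>L'. card (AP P) * card L')" using G_sum by (simp add: sum_distrib_right)
  also have "\<dots> < (\<Sum>P\<in>L'. ?G)" by (rule sum_strict_mono[OF finL' ne lt])
  also have "\<dots> = ?G * card L'" by simp
  finally show False by simp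
qed

end


context D
begin

lemma sw_in:
  assumes "\<sigma> \<in> bijections X Y" "k \<in> X" "i \<in> X"
  shows "\<sigma> \<circ> transpose k i \<in> bijections X Y"
proof (rule bijectionsI)
  show "\<And>x. x \<notin> X \<Longrightarrow> (\<sigma> \<circ> transpose k i) x = undefined"
  proof -
    fix x assume x: "x \<notin> X"
    hence "x \<noteq> k" "x \<noteq> i" using assms by auto
    hence "transpose k i x = x" by simp
    then show "(\<sigma> \<circ> transpose k i) x = undefined" using bijectionsD(6)[OF assms(1) x] by simp
  qed
  have "bij_betw (transpose k i) X X" using assms by simp
  then show "bij_betw (\<sigma> \<circ> transpose k i) X Y" using bij_betw_trans bijectionsD(2)[OF assms(1)] by blast
qed

definition W :: "nat \<Rightarrow> nat \<Rightarrow> ((nat \<Rightarrow> nat) \<times> nat) set" where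
  "W k j = Sigma {\<sigma>\<in>bijections X Y. \<sigma> k = j} (\<lambda>_. X - {k})"

definition sw :: "nat \<Rightarrow> (nat \<Rightarrow> nat) \<times> nat \<Rightarrow> nat \<Rightarrow> nat" where
  "sw k p = fst p \<circ> transpose k (snd p)"

lemma sw_inj:
  assumes "k \<in> X"
  shows "inj_on (sw k) (W k j)"
proof (rule inj_onI)
  fix p1 p2 assume p: "p1 \<in> W k j" "p2 \<in> W k j" and e: "sw k p1 = sw k p2"
  obtain s1 i1 where p1: "p1 = (s1, i1)" by (cases p1)
  obtain s2 i2 where p2: "p2 = (s2, i2)" by (cases p2)
  have h1: "s1 \<in> bijections X Y" "s1 k = j" "i1 \<in> X" "i1 \<noteq> k" using p(1) p1 unfolding W_def by auto
  have h2: "s2 \<in> bijections X Y" "s2 k = j" "i2 \<in> X" "i2 \<noteq> k" using p(2) p2 unfolding W_def by auto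
  have e2: "\<And>x. s1 (transpose k i1 x) = s2 (transpose k i2 x)"
    using e p1 p2 unfolding sw_def by (metis comp_apply fst_conv snd_conv)
  have "s2 (transpose k i2 i1) = j" using e2[of i1] h1 by simp
  hence "s2 (transpose k i2 i1) = s2 k" using h2 by simp
  moreover have "transpose k i2 i1 \<in> X" using h1 h2 assms by (auto simp: transpose_def)
  ultimately have "transpose k i2 i1 = k" using bijectionsD(3)[OF h2(1)] assms by (meson inj_onD)
  hence "transpose k i2 (transpose k i2 i1) = transpose k i2 k" by simp
  hence i: "i1 = i2" by simp
  have "s1 = s2"
  proof
    fix x
    have "s1 (transpose k i1 (transpose k i1 x)) = s2 (transpose k i2 (transpose k i1 x))" by (rule e2)
    then show "s1 x = s2 x" using i by simp
  qed
  then show "p1 = p2" using p1 p2 i by simp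
qed

lemma sw_mem: "p \<in> W k j \<Longrightarrow> k \<in> X \<Longrightarrow> sw k p \<in> bijections X Y"
  unfolding W_def sw_def using sw_in by auto

lemma exactly_one:
  assumes p: "(\<sigma>, i) \<in> W k j" and kj: "(k, j) \<in> L" "k \<in> X"
    and Z1: "Z \<sigma> = 1" and Z2: "Z (sw k (\<sigma>, i)) = 1"
  shows "((k, \<sigma> i) \<in> L) \<noteq> ((i, j) \<in> L)"
proof -
  have h: "\<sigma> \<in> bijections X Y" "\<sigma> k = j" "i \<in> X" "i \<noteq> k" using p unfolding W_def by auto
  define s' where "s' = sw k (\<sigma>, i)"
  have s'k: "s' k = \<sigma> i" unfolding s'_def sw_def by simp
  have s'i: "s' i = j" unfolding s'_def sw_def using h by simp
  have s'x: "\<And>x. x \<noteq> k \<Longrightarrow> x \<noteq> i \<Longrightarrow> s' x = \<sigma> x" unfolding s'_def sw_def by simp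
  have Z2': "Z s' = 1" using Z2 s'_def by simp
  show ?thesis
  proof
    assume both: "((k, \<sigma> i) \<in> L) = ((i, j) \<in> L)"
    show False
    proof (cases "(i, j) \<in> L")
      case True
      hence "(k, s' k) \<in> L" "(i, s' i) \<in> L" using both s'k s'i by auto
      hence "k = i" using Z1_unique[OF Z2' kj(2) _ h(3)] by simp
      then show False using h by simp
    next
      case False
      hence nk: "(k, s' k) \<notin> L" and ni: "(i, s' i) \<notin> L" using both s'k s'i by auto
      have "card {x\<in>X. (x, s' x) \<in> L} = 1" using Z2' unfolding Z_def .
      then obtain x where x: "{x\<in>X. (x, s' x) \<in> L} = {x}" by (rule card_1_singletonE)
      hence xx: "x \<in> X" "(x, s' x) \<in> L" by auto
      have "x \<noteq> k" "x \<noteq> i" using xx nk ni by auto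
      hence "(x, \<sigma> x) \<in> L" using xx s'x by simp
      hence "x = k" using Z1_unique[OF Z1 xx(1) _ kj(2)] kj h by simp
      then show False using \<open>x \<noteq> k\<close> by simp
    qed
  qed
qed


definition Ew :: "nat \<Rightarrow> nat \<Rightarrow> (nat \<times> nat) set" where
  "Ew k j = {rc \<in> (X-{k}) \<times> (Y-{j}). ((k, snd rc) \<in> L) \<noteq> ((fst rc, j) \<in> L)}"

lemma finW: "finite (W k j)" unfolding W_def using finB finX by auto

lemma count_E:
  assumes "k \<in> X" "j \<in> Y"
  shows "card {p\<in>W k j. ((k, fst p (snd p)) \<in> L) \<noteq> ((snd p, j) \<in> L)} \<le> card (Ew k j) * fact (card X - 2)"
proof -
  let ?S = "{p\<in>W k j. ((k, fst p (snd p)) \<in> L) \<noteq> ((snd p, j) \<in> L)}"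
  let ?F = "\<lambda>rc. {\<sigma>\<in>bijections X Y. \<sigma> k = j \<and> \<sigma> (fst rc) = snd rc} \<times> {fst rc}"
  have sub: "?S \<subseteq> (\<Union>rc\<in>Ew k j. ?F rc)"
  proof
    fix p assume p: "p \<in> ?S"
    obtain \<sigma> r where pr: "p = (\<sigma>, r)" by (cases p)
    have h: "\<sigma> \<in> bijections X Y" "\<sigma> k = j" "r \<in> X" "r \<noteq> k" using p pr unfolding W_def by auto
    have "\<sigma> r \<in> Y" using bijectionsD(5)[OF h(1) h(3)] .
    moreover have "\<sigma> r \<noteq> j"
    proof
      assume "\<sigma> r = j"
      hence "\<sigma> r = \<sigma> k" using h by simp
      hence "r = k" using bijectionsD(3)[OF h(1)] h(3) assms(1) by (meson inj_onD)
      then show False using h by simp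
    qed
    ultimately have "(r, \<sigma> r) \<in> Ew k j" using p pr h unfolding Ew_def by auto
    moreover have "p \<in> ?F (r, \<sigma> r)" using pr h by auto
    ultimately show "p \<in> (\<Union>rc\<in>Ew k j. ?F rc)" by blast
  qed
  have finEw: "finite (Ew k j)" unfolding Ew_def using finX finY by auto
  have "card ?S \<le> card (\<Union>rc\<in>Ew k j. ?F rc)"
    by (rule card_mono[OF _ sub]) (use finEw finB in auto)
  also have "\<dots> \<le> (\<Sum>rc\<in>Ew k j. card (?F rc))" by (rule card_UN_le[OF finEw])
  also have "\<dots> = (\<Sum>rc\<in>Ew k j. fact (card X - 2))"
  proof (rule sum.cong[OF refl])
    fix rc assume rc: "rc \<in> Ew k j"
    have "card (?F rc) = card {\<sigma>\<in>bijections X Y. \<sigma> k = j \<and> \<sigma> (fst rc) = snd rc}"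
      by (simp add: card_cartesian_product)
    also have "\<dots> = fact (card X - 2)" using rc assms unfolding Ew_def by (intro fix2) auto
    finally show "card (?F rc) = fact (card X - 2)" .
  qed
  also have "\<dots> = card (Ew k j) * fact (card X - 2)" by simp
  finally show ?thesis .
qed

lemma card_W: "k \<in> X \<Longrightarrow> j \<in> Y \<Longrightarrow> card (W k j) = fact (card X - 1) * (card X - 1)"
  unfolding W_def using finB finX fix1 by (simp add: card_SigmaI)

lemma bad1: assumes "k \<in> X" shows "card {p\<in>W k j. Z (fst p) \<noteq> 1} = card {\<sigma>\<in>bijections X Y. \<sigma> k = j \<and> Z \<sigma> \<noteq> 1} * (card X - 1)"
proof -
  have "{p\<in>W k j. Z (fst p) \<noteq> 1} = Sigma {\<sigma>\<in>bijections X Y. \<sigma> k = j \<and> Z \<sigma> \<noteq> 1} (\<lambda>_. X - {k})"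
    unfolding W_def by auto
  then show ?thesis using finB finX \<open>k \<in> X\<close> by (simp add: card_SigmaI)
qed

lemma split_fix:
  assumes "k \<in> X" "j \<in> Y"
  shows "card {\<sigma>\<in>bijections X Y. \<sigma> k = j \<and> Z \<sigma> \<noteq> 1} + card (AP (k, j)) = fact (card X - 1)"
proof -
  have u: "{\<sigma>\<in>bijections X Y. \<sigma> k = j \<and> Z \<sigma> \<noteq> 1} \<union> AP (k, j) = {\<sigma>\<in>bijections X Y. \<sigma> k = j}"
    unfolding AP_def by auto
  have "card {\<sigma>\<in>bijections X Y. \<sigma> k = j \<and> Z \<sigma> \<noteq> 1} + card (AP (k, j))
     = card ({\<sigma>\<in>bijections X Y. \<sigma> k = j \<and> Z \<sigma> \<noteq> 1} \<union> AP (k, j))"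
    by (rule card_Un_disjoint[symmetric]) (use finB in \<open>auto simp: AP_def\<close>)
  then show ?thesis unfolding u using fix1[OF assms] by simp
qed

lemma bad2:
  assumes "k \<in> X"
  shows "card {p\<in>W k j. Z (sw k p) \<noteq> 1} \<le> card {\<sigma>\<in>bijections X Y. Z \<sigma> \<noteq> 1}"
proof (rule card_inj_on_le)
  show "inj_on (sw k) {p\<in>W k j. Z (sw k p) \<noteq> 1}" using sw_inj[OF assms] by (rule inj_on_subset) auto
  show "sw k ` {p\<in>W k j. Z (sw k p) \<noteq> 1} \<subseteq> {\<sigma>\<in>bijections X Y. Z \<sigma> \<noteq> 1}"
    using sw_mem assms by auto
  show "finite {\<sigma>\<in>bijections X Y. Z \<sigma> \<noteq> 1}" using finB by simp
qed

lemma step3: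
  assumes kj: "(k, j) \<in> L'"
  shows "card (AP (k, j)) * (card X - 1) \<le> card {\<sigma>\<in>bijections X Y. Z \<sigma> \<noteq> 1} + card (Ew k j) * fact (card X - 2)"
proof -
  have k: "k \<in> X" and j: "j \<in> Y" and kjL: "(k, j) \<in> L" using kj unfolding L'_def by auto
  let ?A = "{p\<in>W k j. Z (fst p) \<noteq> 1}"
  let ?B = "{p\<in>W k j. Z (sw k p) \<noteq> 1}"
  let ?E = "{p\<in>W k j. ((k, fst p (snd p)) \<in> L) \<noteq> ((snd p, j) \<in> L)}"
  have sub: "W k j \<subseteq> ?A \<union> ?B \<union> ?E"
  proof
    fix p assume p: "p \<in> W k j"
    obtain \<sigma> i where pr: "p = (\<sigma>, i)" by (cases p)
    show "p \<in> ?A \<union> ?B \<union> ?E"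
    proof (cases "Z \<sigma> = 1 \<and> Z (sw k (\<sigma>, i)) = 1")
      case True
      then have "((k, \<sigma> i) \<in> L) \<noteq> ((i, j) \<in> L)" using exactly_one[of \<sigma> i k j] p pr kjL k by auto
      then show ?thesis using p pr by auto
    next
      case False
      then show ?thesis using p pr by auto
    qed
  qed
  have "card (W k j) \<le> card (?A \<union> ?B \<union> ?E)" by (rule card_mono[OF _ sub]) (use finW in auto)
  also have "\<dots> \<le> card (?A \<union> ?B) + card ?E" by (rule card_Un_le)
  also have "\<dots> \<le> card ?A + card ?B + card ?E" using card_Un_le[of ?A ?B] by simp
  finally have "card (W k j) \<le> card ?A + card ?B + card ?E" .
  hence "fact (card X - 1) * (card X - 1) \<le>
      card {\<sigma>\<in>bijections X Y. \<sigma> k = j \<and> Z \<sigma> \<noteq> 1} * (card X - 1) + card {\<sigma>\<in>bijections X Y. Z \<sigma> \<noteq> 1}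
      + card (Ew k j) * fact (card X - 2)"
    using card_W[OF k j] bad1[OF k, of j] bad2[OF k, of j] count_E[OF k j] by linarith
  moreover have "fact (card X - 1) * (card X - 1) = card {\<sigma>\<in>bijections X Y. \<sigma> k = j \<and> Z \<sigma> \<noteq> 1} * (card X - 1)
      + card (AP (k, j)) * (card X - 1)"
    using split_fix[OF k j] by (metis add_mult_distrib)
  ultimately show ?thesis by linarith
qed

end


lemma num_max:
  fixes a a' b b' n :: real
  assumes "a \<ge> 0" "b \<ge> 0" "a' \<ge> 0" "b' \<ge> 0" "a + a' = n" "b + b' = n"
    and "b' * a + b * a' \<ge> 7/10 * n^2"
  shows "a \<ge> 7/10 * n \<or> b \<ge> 7/10 * n"
proof (rule ccontr)
  assume "\<not> ?thesis"
  hence lt: "a < 7/10 * n" "b < 7/10 * n" by auto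
  have n0: "n > 0" using lt assms by linarith
  have e: "b' * a + b * a' = a * n + b * n - 2 * (a * b)"
  proof -
    have eq: "b' = n - b" "a' = n - a" using assms(5,6) by linarith+
    show ?thesis unfolding eq by (simp add: algebra_simps)
  qed
  show False
  proof (cases "a \<le> n/2 \<and> b \<le> n/2")
    case True
    have "0 \<le> (n/2 - a) * (n/2 - b)" using True by simp
    hence "a * n + b * n - 2 * (a * b) \<le> n^2 / 2" by (simp add: algebra_simps power2_eq_square)
    moreover have "n^2/2 < 7/10 * n^2" using n0 by simp
    ultimately show False using assms(7) e by linarith
  next
    case False
    show False
    proof (cases "a \<le> n/2")
      case False
      hence a: "\<not> a \<le> n/2" .
      have "b * (n - 2 * a) \<le> 0" using a assms(2) by (simp add: mult_nonneg_nonpos)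
      hence "a * n + b * n - 2 * (a * b) \<le> a * n" by (simp add: algebra_simps)
      moreover have "a * n < 7/10 * n^2" using lt n0 by (simp add: power2_eq_square)
      ultimately show False using assms(7) e by linarith
    next
      case True
      hence b: "\<not> b \<le> n/2" using \<open>\<not> (a \<le> n/2 \<and> b \<le> n/2)\<close> by simp
      have "a * (n - 2 * b) \<le> 0" using b assms(1) by (simp add: mult_nonneg_nonpos)
      hence "a * n + b * n - 2 * (a * b) \<le> b * n" by (simp add: algebra_simps)
      moreover have "b * n < 7/10 * n^2" using lt n0 by (simp add: power2_eq_square)
      ultimately show False using assms(7) e by linarith
    qed
  qed
qed


lemma num_E:
  fixes A N q m n1 F2 E :: real
  assumes AN: "A * N \<ge> (1-q) * (m * n1 * F2)" and N: "N \<le> 131/100 * m" and A0: "A \<ge> 0"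
    and step: "A * n1 \<le> q * (m * n1 * F2) + E * F2" and mn: "m = n1 + 1" and n1: "n1 \<ge> 1"
    and F2: "F2 > 0" and q0: "0 \<le> q" and q: "q < 1/50"
  shows "E \<ge> 7/10 * n1^2"
proof -
  have m0: "m > 0" using mn n1 by simp
  have "A * N \<le> A * (131/100 * m)" using N A0 by (rule mult_left_mono)
  hence "(1-q) * (m * n1 * F2) \<le> (A * 131/100) * m" using AN by (simp add: algebra_simps)
  hence "((1-q) * (n1 * F2)) * m \<le> (A * 131/100) * m" by (simp add: algebra_simps)
  hence A1: "(1-q) * (n1 * F2) \<le> A * 131/100" using m0 by (simp add: mult_le_cancel_right)
  have "(1-q) * (n1 * F2) * n1 \<le> (A * 131/100) * n1" using A1 n1 by (intro mult_right_mono) auto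
  hence A2: "(100/131) * (1-q) * n1^2 * F2 \<le> A * n1" by (simp add: algebra_simps power2_eq_square)
  have "q * (m * n1 * F2) \<le> q * (2 * n1 * n1 * F2)"
  proof -
    have "m * n1 * F2 \<le> 2 * n1 * n1 * F2" using mn n1 F2 by (intro mult_right_mono) auto
    then show ?thesis using q0 by (rule mult_left_mono)
  qed
  hence "(100/131) * (1-q) * n1^2 * F2 \<le> 2 * q * n1^2 * F2 + E * F2"
    using A2 step by (simp add: power2_eq_square algebra_simps)
  hence "((100/131) * (1-q) - 2 * q) * n1^2 * F2 \<le> E * F2" by (simp add: algebra_simps)
  hence E1: "((100/131) * (1-q) - 2 * q) * n1^2 \<le> E" using F2 by (simp add: mult_le_cancel_right)
  have "(100/131) * (1-q) - 2 * q = 100/131 - (362/131) * q" by (simp add: field_simps)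
  hence "7/10 \<le> (100/131) * (1-q) - 2 * q" using q by linarith
  hence "7/10 * n1^2 \<le> ((100/131) * (1-q) - 2 * q) * n1^2" by (intro mult_right_mono) auto
  then show ?thesis using E1 by linarith
qed

lemma num_final:
  fixes m n1 N C K u q :: real
  assumes mn: "m = n1 + 1" and n1: "n1 \<ge> 1" and N: "N \<le> 131/100 * m"
    and C: "C \<ge> 1 + 7/10 * n1" and K: "K \<le> N - C" and u: "u = m - C" and u0: "u \<ge> 0"
    and main: "u * (n1 - K) \<le> q * m * n1" and q0: "q \<ge> 0"
  shows "C \<ge> (1 - 13 * q) * m"
proof -
  have "K \<le> 92/100 * n1" using mn n1 N C K by linarith
  hence "8/100 * n1 \<le> n1 - K" by linarith
  hence "u * (8/100 * n1) \<le> u * (n1 - K)" using u0 by (rule mult_left_mono)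
  hence "(8/100 * u) * n1 \<le> (q * m) * n1" using main by (simp add: algebra_simps)
  hence "8/100 * u \<le> q * m" using n1 by (simp add: mult_le_cancel_right)
  moreover have "q * m \<ge> 0" using q0 mn n1 by simp
  ultimately have "u \<le> 13 * (q * m)" by linarith
  moreover have "(1 - 13 * q) * m = m - 13 * (q * m)" by (simp add: algebra_simps)
  ultimately show ?thesis using u by linarith
qed



context D
begin

lemma zero_lb:
  assumes ac: "a \<in> X" "c \<in> Y" "(a, c) \<notin> L"
  shows "fact (card X - 1) \<le> card {\<sigma>\<in>bijections X Y. \<sigma> a = c \<and> Z \<sigma> = 0}
           + card {p\<in>L'. fst p \<noteq> a \<and> snd p \<noteq> c} * fact (card X - 2)"
proof -
  let ?K = "{p\<in>L'. fst p \<noteq> a \<and> snd p \<noteq> c}"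
  let ?F = "\<lambda>p. {\<sigma>\<in>bijections X Y. \<sigma> a = c \<and> \<sigma> (fst p) = snd p}"
  have finK: "finite ?K" using finL' by simp
  have sub: "{\<sigma>\<in>bijections X Y. \<sigma> a = c} \<subseteq> {\<sigma>\<in>bijections X Y. \<sigma> a = c \<and> Z \<sigma> = 0} \<union> (\<Union>p\<in>?K. ?F p)"
  proof
    fix \<sigma> assume s: "\<sigma> \<in> {\<sigma>\<in>bijections X Y. \<sigma> a = c}"
    show "\<sigma> \<in> {\<sigma>\<in>bijections X Y. \<sigma> a = c \<and> Z \<sigma> = 0} \<union> (\<Union>p\<in>?K. ?F p)"
    proof (cases "Z \<sigma> = 0")
      case True then show ?thesis using s by auto
    next
      case False
      hence "card {i\<in>X. (i, \<sigma> i) \<in> L} \<noteq> 0" unfolding Z_def by simp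
      hence "{i\<in>X. (i, \<sigma> i) \<in> L} \<noteq> {}" by (metis card.empty)
      then obtain i where i: "i \<in> X" "(i, \<sigma> i) \<in> L" by auto
      have sb: "\<sigma> \<in> bijections X Y" "\<sigma> a = c" using s by auto
      have ia: "i \<noteq> a" using i sb ac by auto
      have "\<sigma> i \<noteq> c"
      proof
        assume "\<sigma> i = c"
        hence "\<sigma> i = \<sigma> a" using sb by simp
        hence "i = a" using bijectionsD(3)[OF sb(1)] i(1) ac(1) by (meson inj_onD)
        then show False using ia by simp
      qed
      moreover have "\<sigma> i \<in> Y" using bijectionsD(5)[OF sb(1) i(1)] .
      ultimately have "(i, \<sigma> i) \<in> ?K" using i ia unfolding L'_def by auto
      moreover have "\<sigma> \<in> ?F (i, \<sigma> i)" using sb by auto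
      ultimately show ?thesis by blast
    qed
  qed
  have "fact (card X - 1) = card {\<sigma>\<in>bijections X Y. \<sigma> a = c}" using fix1[OF ac(1,2)] by simp
  also have "\<dots> \<le> card ({\<sigma>\<in>bijections X Y. \<sigma> a = c \<and> Z \<sigma> = 0} \<union> (\<Union>p\<in>?K. ?F p))"
    by (rule card_mono[OF _ sub]) (use finB finK in auto)
  also have "\<dots> \<le> card {\<sigma>\<in>bijections X Y. \<sigma> a = c \<and> Z \<sigma> = 0} + card (\<Union>p\<in>?K. ?F p)"
    by (rule card_Un_le)
  also have "card (\<Union>p\<in>?K. ?F p) \<le> (\<Sum>p\<in>?K. card (?F p))" by (rule card_UN_le[OF finK])
  also have "(\<Sum>p\<in>?K. card (?F p)) \<le> (\<Sum>p\<in>?K. fact (card X - 2))"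
  proof (rule sum_mono)
    fix p assume p: "p \<in> ?K"
    have "fst p \<in> X" "snd p \<in> Y" using p unfolding L'_def by auto
    then show "card (?F p) \<le> fact (card X - 2)" using fix2_le[OF ac(1,2)] p by auto
  qed
  also have "(\<Sum>p\<in>?K. fact (card X - 2)) = card ?K * fact (card X - 2)" by simp
  finally show ?thesis by simp
qed

lemma zero_Q:
  assumes Q: "\<And>p. p \<in> Q \<Longrightarrow> fst p \<in> X \<and> snd p \<in> Y \<and> p \<notin> L"
    and line: "\<And>p p'. p \<in> Q \<Longrightarrow> p' \<in> Q \<Longrightarrow> fst p = fst p' \<or> snd p = snd p'"
    and K: "\<And>p. p \<in> Q \<Longrightarrow> card {p'\<in>L'. fst p' \<noteq> fst p \<and> snd p' \<noteq> snd p} \<le> K0"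
  shows "card Q * fact (card X - 1) \<le> card {\<sigma>\<in>bijections X Y. Z \<sigma> = 0} + card Q * (K0 * fact (card X - 2))"
proof -
  let ?F = "\<lambda>p. {\<sigma>\<in>bijections X Y. \<sigma> (fst p) = snd p \<and> Z \<sigma> = 0}"
  have finQ: "finite Q"
  proof (rule finite_subset)
    show "Q \<subseteq> X \<times> Y" using Q by force
    show "finite (X \<times> Y)" using finX finY by simp
  qed
  have "card Q * fact (card X - 1) = (\<Sum>p\<in>Q. fact (card X - 1))" by simp
  also have "\<dots> \<le> (\<Sum>p\<in>Q. card (?F p) + K0 * fact (card X - 2))"
  proof (rule sum_mono)
    fix p assume p: "p \<in> Q"
    obtain a c where pac: "p = (a, c)" by (cases p)
    have "fact (card X - 1) \<le> card (?F p) + card {p'\<in>L'. fst p' \<noteq> a \<and> snd p' \<noteq> c} * fact (card X - 2)"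
      using zero_lb[of a c] Q[OF p] pac by simp
    also have "\<dots> \<le> card (?F p) + K0 * fact (card X - 2)"
      using K[OF p] pac by simp
    finally show "fact (card X - 1) \<le> card (?F p) + K0 * fact (card X - 2)" .
  qed
  also have "\<dots> = (\<Sum>p\<in>Q. card (?F p)) + card Q * (K0 * fact (card X - 2))" by (simp add: sum.distrib)
  also have "(\<Sum>p\<in>Q. card (?F p)) = card (\<Union>p\<in>Q. ?F p)"
  proof (rule card_UN_disjoint[symmetric, OF finQ])
    show "\<forall>p\<in>Q. finite (?F p)" using finB by auto
    show "\<forall>p\<in>Q. \<forall>p'\<in>Q. p \<noteq> p' \<longrightarrow> ?F p \<inter> ?F p' = {}"
    proof (intro ballI impI)
      fix p p' assume pp: "p \<in> Q" "p' \<in> Q" "p \<noteq> p'"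
      show "?F p \<inter> ?F p' = {}"
      proof (rule ccontr)
        assume "?F p \<inter> ?F p' \<noteq> {}"
        then obtain \<sigma> where s: "\<sigma> \<in> bijections X Y" "\<sigma> (fst p) = snd p" "\<sigma> (fst p') = snd p'" by auto
        show False
        proof (cases "fst p = fst p'")
          case True
          then have "snd p = snd p'" using s by simp
          then show False using True pp(3) by (simp add: prod_eq_iff)
        next
          case False
          then have "snd p = snd p'" using line[OF pp(1,2)] by simp
          hence "\<sigma> (fst p) = \<sigma> (fst p')" using s by simp
          hence "fst p = fst p'" using bijectionsD(3)[OF s(1)] Q[OF pp(1)] Q[OF pp(2)] by (meson inj_onD)
          then show False using False by simp
        qed
      qed
    qed
  qed
  also have "card (\<Union>p\<in>Q. ?F p) \<le> card {\<sigma>\<in>bijections X Y. Z \<sigma> = 0}"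
    by (rule card_mono) (use finB in auto)
  finally show ?thesis by simp
qed


lemma card_filter_split: "finite A \<Longrightarrow> card {x\<in>A. P x} + card {x\<in>A. \<not> P x} = card A"
proof -
  assume fA: "finite A"
  have "card {x\<in>A. P x} + card {x\<in>A. \<not> P x} = card ({x\<in>A. P x} \<union> {x\<in>A. \<not> P x})"
    by (rule card_Un_disjoint[symmetric]) (use fA in auto)
  also have "{x\<in>A. P x} \<union> {x\<in>A. \<not> P x} = A" by auto
  finally show ?thesis .
qed

lemma card_Ew:
  "card (Ew k j) = card {r\<in>X-{k}. (r, j) \<notin> L} * card {c\<in>Y-{j}. (k, c) \<in> L}
     + card {r\<in>X-{k}. (r, j) \<in> L} * card {c\<in>Y-{j}. (k, c) \<notin> L}"
proof -
  have e: "Ew k j = ({r\<in>X-{k}. (r, j) \<notin> L} \<times> {c\<in>Y-{j}. (k, c) \<in> L}) \<union>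
      ({r\<in>X-{k}. (r, j) \<in> L} \<times> {c\<in>Y-{j}. (k, c) \<notin> L})"
    unfolding Ew_def by auto
  have "card (Ew k j) = card ({r\<in>X-{k}. (r, j) \<notin> L} \<times> {c\<in>Y-{j}. (k, c) \<in> L})
      + card ({r\<in>X-{k}. (r, j) \<in> L} \<times> {c\<in>Y-{j}. (k, c) \<notin> L})"
    unfolding e by (rule card_Un_disjoint) (use finX finY in auto)
  then show ?thesis by (simp add: card_cartesian_product)
qed

lemma col_count:
  assumes "k \<in> X" "(k, j) \<in> L"
  shows "card {r\<in>X. (r, j) \<in> L} = card {r\<in>X-{k}. (r, j) \<in> L} + 1"
proof -
  have "{r\<in>X. (r, j) \<in> L} = insert k {r\<in>X-{k}. (r, j) \<in> L}" using assms by auto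
  then show ?thesis using finX by simp
qed

lemma row_count:
  assumes "j \<in> Y" "(k, j) \<in> L"
  shows "card {c\<in>Y. (k, c) \<in> L} = card {c\<in>Y-{j}. (k, c) \<in> L} + 1"
proof -
  have "{c\<in>Y. (k, c) \<in> L} = insert j {c\<in>Y-{j}. (k, c) \<in> L}" using assms by auto
  then show ?thesis using finY by simp
qed

lemma L'_col: "card {p\<in>L'. snd p \<noteq> j} + card {r\<in>X. (r, j) \<in> L} = card L'" if "j \<in> Y"
proof -
  have "{p\<in>L'. snd p = j} = {r\<in>X. (r, j) \<in> L} \<times> {j}" unfolding L'_def using that by auto
  hence "card {p\<in>L'. snd p = j} = card {r\<in>X. (r, j) \<in> L}" by (simp add: card_cartesian_product)
  moreover have "card {p\<in>L'. snd p = j} + card {p\<in>L'. snd p \<noteq> j} = card L'"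
    using card_filter_split[OF finL'] .
  ultimately show ?thesis by simp
qed

lemma L'_row: "card {p\<in>L'. fst p \<noteq> k} + card {c\<in>Y. (k, c) \<in> L} = card L'" if "k \<in> X"
proof -
  have "{p\<in>L'. fst p = k} = {k} \<times> {c\<in>Y. (k, c) \<in> L}" unfolding L'_def using that by auto
  hence "card {p\<in>L'. fst p = k} = card {c\<in>Y. (k, c) \<in> L}" by (simp add: card_cartesian_product)
  moreover have "card {p\<in>L'. fst p = k} + card {p\<in>L'. fst p \<noteq> k} = card L'"
    using card_filter_split[OF finL'] .
  ultimately show ?thesis by simp
qed

lemma fact_facts:
  assumes "card X \<ge> 2"
  shows "real (fact (card X - 1)) = real (card X - 1) * real (fact (card X - 2))"
    "real (fact (card X)) = real (card X) * real (card X - 1) * real (fact (card X - 2))"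
proof -
  have F1n: "fact (card X - 1) = (card X - 1) * fact (card X - 2)"
    using assms fact_reduce[where 'a=nat, of "card X - 1"] by (simp add: numeral_2_eq_2 of_nat_id)
  then show "real (fact (card X - 1)) = real (card X - 1) * real (fact (card X - 2))"
    by (simp only: of_nat_mult)
  have Mn: "fact (card X) = card X * fact (card X - 1)"
    using assms fact_reduce[where 'a=nat, of "card X"] by simp
  then show "real (fact (card X)) = real (card X) * real (card X - 1) * real (fact (card X - 2))"
    by (simp only: Mn F1n of_nat_mult mult.assoc)
qed


lemma finish:
  assumes m2: "card X \<ge> 2" and q0: "q \<ge> 0" and Nb: "real (card L') \<le> 131/100 * card X"
    and bad0: "real (card {\<sigma>\<in>bijections X Y. Z \<sigma> = 0}) \<le> q * fact (card X)"
    and uC: "u + C = card X" and KC: "K0 + C = card L'"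
    and Cb: "real C \<ge> 1 + 7/10 * real (card X - 1)"
    and zq: "u * fact (card X - 1) \<le> card {\<sigma>\<in>bijections X Y. Z \<sigma> = 0} + u * (K0 * fact (card X - 2))"
  shows "real C \<ge> (1 - 13 * q) * real (card X)"
proof -
  define n1 where "n1 = real (card X - 1)"
  define m where "m = real (card X)"
  define F2 where "F2 = real (fact (card X - 2))"
  have mn: "m = n1 + 1" using m2 unfolding m_def n1_def by simp
  have n1: "n1 \<ge> 1" using m2 unfolding n1_def by simp
  have F2: "F2 > 0" unfolding F2_def by simp
  have F1: "real (fact (card X - 1)) = n1 * F2" using fact_facts[OF m2] unfolding n1_def F2_def by simp
  have M: "real (fact (card X)) = m * n1 * F2" using fact_facts[OF m2] unfolding m_def n1_def F2_def by simp
  have zr: "real u * (n1 * F2) \<le> real (card {\<sigma>\<in>bijections X Y. Z \<sigma> = 0}) + real u * (real K0 * F2)"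
  proof -
    have "real (u * fact (card X - 1)) \<le> real (card {\<sigma>\<in>bijections X Y. Z \<sigma> = 0} + u * (K0 * fact (card X - 2)))"
      using zq by (simp only: of_nat_le_iff)
    then show ?thesis by (simp only: of_nat_mult of_nat_add F1 F2_def[symmetric])
  qed
  have "real u * (n1 * F2) \<le> q * (m * n1 * F2) + real u * (real K0 * F2)"
    using zr bad0 M by simp
  hence "(real u * (n1 - real K0)) * F2 \<le> (q * m * n1) * F2" by (simp add: algebra_simps)
  hence main: "real u * (n1 - real K0) \<le> q * m * n1" using F2 by (simp add: mult_le_cancel_right)
  have "real C \<ge> (1 - 13 * q) * m"
  proof (rule num_final[OF mn n1 _ _ _ _ _ main q0])
    show "real (card L') \<le> 131/100 * m" using Nb unfolding m_def .
    show "real C \<ge> 1 + 7/10 * n1" using Cb unfolding n1_def .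
    show "real K0 \<le> real (card L') - real C" using KC by simp
    show "real u = m - real C" using uC unfolding m_def by simp
    show "real u \<ge> 0" by simp
  qed
  then show ?thesis unfolding m_def .
qed


lemma main_m2:
  assumes m2: "card X \<ge> 2"
    and good: "(1-q) * fact (card X) \<le> real (card {\<sigma>\<in>bijections X Y. Z \<sigma> = 1})"
    and q: "q < 1/50"
  shows "(\<exists>i. strong_row L X Y (13*q) i) \<or> (\<exists>j. strong_col L X Y (13*q) j)"
proof -
  have q0: "q \<ge> 0" by (rule q_nonneg[OF good])
  have bad: "real (card {\<sigma>\<in>bijections X Y. Z \<sigma> \<noteq> 1}) \<le> q * fact (card X)" by (rule bad_bound[OF good])
  have bad0: "real (card {\<sigma>\<in>bijections X Y. Z \<sigma> = 0}) \<le> q * fact (card X)"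
  proof -
    have "card {\<sigma>\<in>bijections X Y. Z \<sigma> = 0} \<le> card {\<sigma>\<in>bijections X Y. Z \<sigma> \<noteq> 1}"
      by (rule card_mono) (use finB in auto)
    then show ?thesis using bad by linarith
  qed
  have Nb: "real (card L') \<le> 131/100 * card X" by (rule Nbound[OF m2 good q])
  define n1 where "n1 = real (card X - 1)"
  define m where "m = real (card X)"
  define F2 where "F2 = real (fact (card X - 2))"
  have mn: "m = n1 + 1" using m2 unfolding m_def n1_def by simp
  have n1: "n1 \<ge> 1" using m2 unfolding n1_def by simp
  have F2: "F2 > 0" unfolding F2_def by simp
  have M: "real (fact (card X)) = m * n1 * F2" using fact_facts[OF m2] unfolding m_def n1_def F2_def by simp
  have Gpos: "card {\<sigma>\<in>bijections X Y. Z \<sigma> = 1} > 0"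
  proof -
    have "(1-q) * fact (card X) > (0::real)" using q by simp
    then show ?thesis using good by linarith
  qed
  obtain P where P: "P \<in> L'" and GP: "card {\<sigma>\<in>bijections X Y. Z \<sigma> = 1} \<le> card (AP P) * card L'"
    using exists_P[OF Gpos] by blast
  obtain k j where Pkj: "P = (k, j)" by (cases P)
  have k: "k \<in> X" and j: "j \<in> Y" and kjL: "(k, j) \<in> L" using P Pkj unfolding L'_def by auto
  have st3: "card (AP (k, j)) * (card X - 1) \<le> card {\<sigma>\<in>bijections X Y. Z \<sigma> \<noteq> 1} + card (Ew k j) * fact (card X - 2)"
    using step3 P Pkj by simp
  have Ebound: "real (card (Ew k j)) \<ge> 7/10 * n1^2"
  proof (rule num_E[where A = "real (card (AP (k, j)))" and N = "real (card L')" and q = q and m = m])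
    have "real (card {\<sigma>\<in>bijections X Y. Z \<sigma> = 1}) \<le> real (card (AP (k, j)) * card L')"
      using GP Pkj by (simp only: of_nat_le_iff)
    then show "real (card (AP (k, j))) * real (card L') \<ge> (1-q) * (m * n1 * F2)"
      using good M by simp
    show "real (card L') \<le> 131/100 * m" using Nb unfolding m_def .
    show "real (card (AP (k, j))) \<ge> 0" by simp
    have "real (card (AP (k, j)) * (card X - 1)) \<le> real (card {\<sigma>\<in>bijections X Y. Z \<sigma> \<noteq> 1} + card (Ew k j) * fact (card X - 2))"
      using st3 by (simp only: of_nat_le_iff)
    hence "real (card (AP (k, j))) * n1 \<le> real (card {\<sigma>\<in>bijections X Y. Z \<sigma> \<noteq> 1}) + real (card (Ew k j)) * F2"
      unfolding n1_def F2_def by (simp only: of_nat_mult of_nat_add)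
    then show "real (card (AP (k, j))) * n1 \<le> q * (m * n1 * F2) + real (card (Ew k j)) * F2"
      using bad M by simp
  qed (use mn n1 F2 q0 q in auto)
  define a where "a = card {c\<in>Y-{j}. (k, c) \<in> L}"
  define a' where "a' = card {c\<in>Y-{j}. (k, c) \<notin> L}"
  define b where "b = card {r\<in>X-{k}. (r, j) \<in> L}"
  define b' where "b' = card {r\<in>X-{k}. (r, j) \<notin> L}"
  have aa: "a + a' = card X - 1" unfolding a_def a'_def
    using card_filter_split[of "Y-{j}" "\<lambda>c. (k, c) \<in> L"] finY j cXY by simp
  have bb: "b + b' = card X - 1" unfolding b_def b'_def
    using card_filter_split[of "X-{k}" "\<lambda>r. (r, j) \<in> L"] finX k by simp
  have cE: "card (Ew k j) = b' * a + b * a'" unfolding a_def a'_def b_def b'_def by (rule card_Ew)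
  have "real a \<ge> 7/10 * n1 \<or> real b \<ge> 7/10 * n1"
  proof (rule num_max[where a' = "real a'" and b' = "real b'"])
    show "real a + real a' = n1" using aa unfolding n1_def by (metis of_nat_add)
    show "real b + real b' = n1" using bb unfolding n1_def by (metis of_nat_add)
    show "real b' * real a + real b * real a' \<ge> 7/10 * n1^2" using Ebound cE by simp
  qed auto
  then show ?thesis
  proof
    assume ha: "real a \<ge> 7/10 * n1"
    define C where "C = card {c\<in>Y. (k, c) \<in> L}"
    define u where "u = card {c\<in>Y. (k, c) \<notin> L}"
    define K0 where "K0 = card {p\<in>L'. fst p \<noteq> k}"
    have Ca: "C = a + 1" unfolding C_def a_def using row_count[OF j kjL] .
    have uC: "u + C = card X" unfolding u_def C_def using card_filter_split[OF finY, of "\<lambda>c. (k, c) \<in> L"] cXY by simp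
    have KC: "K0 + C = card L'" unfolding K0_def C_def by (rule L'_row[OF k])
    have Cb: "real C \<ge> 1 + 7/10 * real (card X - 1)" using Ca ha unfolding n1_def by simp
    have zq: "u * fact (card X - 1) \<le> card {\<sigma>\<in>bijections X Y. Z \<sigma> = 0} + u * (K0 * fact (card X - 2))"
    proof -
      let ?Q = "{k} \<times> {c\<in>Y. (k, c) \<notin> L}"
      have "card ?Q * fact (card X - 1) \<le> card {\<sigma>\<in>bijections X Y. Z \<sigma> = 0} + card ?Q * (K0 * fact (card X - 2))"
      proof (rule zero_Q)
        show "\<And>p. p \<in> ?Q \<Longrightarrow> fst p \<in> X \<and> snd p \<in> Y \<and> p \<notin> L" using k by auto
        show "\<And>p p'. p \<in> ?Q \<Longrightarrow> p' \<in> ?Q \<Longrightarrow> fst p = fst p' \<or> snd p = snd p'" by auto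
        show "\<And>p. p \<in> ?Q \<Longrightarrow> card {p'\<in>L'. fst p' \<noteq> fst p \<and> snd p' \<noteq> snd p} \<le> K0"
          unfolding K0_def by (rule card_mono) (use finL' in auto)
      qed
      moreover have "card ?Q = u" unfolding u_def by (simp add: card_cartesian_product)
      ultimately show ?thesis by simp
    qed
    have "real C \<ge> (1 - 13 * q) * real (card X)" by (rule finish[OF m2 q0 Nb bad0 uC KC Cb zq])
    hence "strong_row L X Y (13*q) k" unfolding strong_row_def C_def using k cXY by simp
    then show ?thesis by blast
  next
    assume hb: "real b \<ge> 7/10 * n1"
    define C where "C = card {r\<in>X. (r, j) \<in> L}"
    define u where "u = card {r\<in>X. (r, j) \<notin> L}"
    define K0 where "K0 = card {p\<in>L'. snd p \<noteq> j}"
    have Cb': "C = b + 1" unfolding C_def b_def using col_count[OF k kjL] .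
    have uC: "u + C = card X" unfolding u_def C_def using card_filter_split[OF finX, of "\<lambda>r. (r, j) \<in> L"] by simp
    have KC: "K0 + C = card L'" unfolding K0_def C_def by (rule L'_col[OF j])
    have Cb: "real C \<ge> 1 + 7/10 * real (card X - 1)" using Cb' hb unfolding n1_def by simp
    have zq: "u * fact (card X - 1) \<le> card {\<sigma>\<in>bijections X Y. Z \<sigma> = 0} + u * (K0 * fact (card X - 2))"
    proof -
      let ?Q = "{r\<in>X. (r, j) \<notin> L} \<times> {j}"
      have "card ?Q * fact (card X - 1) \<le> card {\<sigma>\<in>bijections X Y. Z \<sigma> = 0} + card ?Q * (K0 * fact (card X - 2))"
      proof (rule zero_Q)
        show "\<And>p. p \<in> ?Q \<Longrightarrow> fst p \<in> X \<and> snd p \<in> Y \<and> p \<notin> L" using j by auto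
        show "\<And>p p'. p \<in> ?Q \<Longrightarrow> p' \<in> ?Q \<Longrightarrow> fst p = fst p' \<or> snd p = snd p'" by auto
        show "\<And>p. p \<in> ?Q \<Longrightarrow> card {p'\<in>L'. fst p' \<noteq> fst p \<and> snd p' \<noteq> snd p} \<le> K0"
          unfolding K0_def by (rule card_mono) (use finL' in auto)
      qed
      moreover have "card ?Q = u" unfolding u_def by (simp add: card_cartesian_product)
      ultimately show ?thesis by simp
    qed
    have "real C \<ge> (1 - 13 * q) * real (card X)" by (rule finish[OF m2 q0 Nb bad0 uC KC Cb zq])
    hence "strong_col L X Y (13*q) j" unfolding strong_col_def C_def using j by simp
    then show ?thesis by blast
  qed
qed

end


lemma (in D) good_iff: "good_diagonal L (gen_diagonal \<sigma> X) \<longleftrightarrow> Z \<sigma> = 1"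
proof -
  have "gen_diagonal \<sigma> X \<inter> L = (\<lambda>i. (i, \<sigma> i)) ` {i\<in>X. (i, \<sigma> i) \<in> L}"
    unfolding gen_diagonal_def by auto
  moreover have "inj_on (\<lambda>i. (i, \<sigma> i)) {i\<in>X. (i, \<sigma> i) \<in> L}" by (auto intro: inj_onI)
  ultimately have "card (gen_diagonal \<sigma> X \<inter> L) = Z \<sigma>" unfolding Z_def by (simp add: card_image)
  then show ?thesis unfolding good_diagonal_def by simp
qed

theorem lemma2p16:
  fixes n :: nat and A :: "nat \<Rightarrow> nat \<Rightarrow> real" and L :: "(nat \<times> nat) set"
    and X Y :: "nat set" and q :: real
  assumes "L \<subseteq> {1..n} \<times> {1..n}"
    and "is_restriction n X Y"
    and "card X \<ge> 1"
    and "q < 1/50"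
    and "q_good L X Y q"
  shows "has_strong_line L X Y (13 * q)"
proof -
  have XY: "X \<subseteq> {1..n}" "Y \<subseteq> {1..n}" "card X = card Y" using assms(2) unfolding is_restriction_def by auto
  have fX: "finite X" using XY finite_subset by blast
  have fY: "finite Y" using XY finite_subset by blast
  interpret D X Y L using fX fY XY(3) by unfold_locales
  have e: "{\<sigma> \<in> bijections X Y. good_diagonal L (gen_diagonal \<sigma> X)} = {\<sigma> \<in> bijections X Y. Z \<sigma> = 1}"
    using good_iff by auto
  have Mpos: "real (card (bijections X Y)) > 0" using cardB by simp
  have good: "(1-q) * fact (card X) \<le> real (card {\<sigma>\<in>bijections X Y. Z \<sigma> = 1})"
  proof -
    have "1 - q \<le> real (card {\<sigma>\<in>bijections X Y. Z \<sigma> = 1}) / real (card (bijections X Y))"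
      using assms(5) e unfolding q_good_def by simp
    hence "(1 - q) * real (card (bijections X Y)) \<le> real (card {\<sigma>\<in>bijections X Y. Z \<sigma> = 1})"
      using Mpos by (simp add: le_divide_eq)
    then show ?thesis using cardB by simp
  qed
  show ?thesis
  proof (cases "card X \<ge> 2")
    case True
    then show ?thesis using main_m2[OF True good assms(4)] unfolding has_strong_line_def by blast
  next
    case False
    hence c1: "card X = 1" using assms(3) by simp
    have q0: "q \<ge> 0" by (rule q_nonneg[OF good])
    have "card {\<sigma>\<in>bijections X Y. Z \<sigma> = 1} > 0"
    proof -
      have "(1-q) * fact (card X) > (0::real)" using assms(4) by simp
      then show ?thesis using good by linarith
    qed
    hence "{\<sigma>\<in>bijections X Y. Z \<sigma> = 1} \<noteq> {}" by (simp only: card_gt_0_iff) blast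
    then obtain \<sigma> where s: "\<sigma> \<in> bijections X Y" "Z \<sigma> = 1" by blast
    have "card {i\<in>X. (i, \<sigma> i) \<in> L} = 1" using s unfolding Z_def by simp
    then obtain x where x: "{i\<in>X. (i, \<sigma> i) \<in> L} = {x}" by (rule card_1_singletonE)
    hence xX: "x \<in> X" "(x, \<sigma> x) \<in> L" by auto
    have "card Y = 1" using c1 XY(3) by simp
    then obtain y where y: "Y = {y}" by (rule card_1_singletonE)
    have "\<sigma> x \<in> Y" using bijectionsD(5)[OF s(1) xX(1)] .
    hence "(x, y) \<in> L" using xX y by simp
    hence "{j\<in>Y. (x, j) \<in> L} = Y" using y by auto
    hence "real (card {j\<in>Y. (x, j) \<in> L}) \<ge> (1 - 13 * q) * real (card Y)" using q0 XY(3) c1 by simp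
    hence "strong_row L X Y (13*q) x" unfolding strong_row_def using xX by simp
    then show ?thesis unfolding has_strong_line_def by blast
  qed
qed


end
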